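(* Let $G$ be a finite simple graph with no isolated vertices, and suppose $\mathrm{Aut}(G)$ contains an element $\sigma$ of order $2$ such that $\sigma(v_0)=v_0$ for exactly one vertex $v_0\in V(G)$, and $v\sigma(v)\notin E(G)$ for all $v\in V(G)$. Then $G$ is an $\mathcal{N}$ position for Grim.
   Context: Grim is a two-player game on a finite simple undirected graph. Any isolated vertices of the starting graph are deleted before play begins. Players alternate moves; a move consists of selecting a vertex of the current graph and deleting it together with all its incident edges, after which every vertex that has become isolated is also deleted. The player who makes the last legal move wins (a player facing the empty graph has no move and loses). A graph is an $\mathcal{N}$ position if the player about to move has a winning strategy, and a $\mathcal{P}$ position otherwise. An automorphism of $G$ is a permutation of $V(G)$ preserving adjacency. *)

theory Defs
  imports Main
begin

definition simple_graph :: "'a set \<Rightarrow> ('a \<Rightarrow> 'a \<Rightarrow> bool) \<Rightarrow> bool" where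
  "simple_graph V E \<longleftrightarrow> finite V \<and> (\<forall>u v. E u v \<longrightarrow> E v u) \<and> (\<forall>v. \<not> E v v)
     \<and> (\<forall>u v. E u v \<longrightarrow> u \<in> V \<and> v \<in> V)"

definition no_isolated :: "'a set \<Rightarrow> ('a \<Rightarrow> 'a \<Rightarrow> bool) \<Rightarrow> bool" where
  "no_isolated V E \<longleftrightarrow> (\<forall>v\<in>V. \<exists>w\<in>V. E v w)"

definition automorphism :: "'a set \<Rightarrow> ('a \<Rightarrow> 'a \<Rightarrow> bool) \<Rightarrow> ('a \<Rightarrow> 'a) \<Rightarrow> bool" where
  "automorphism V E \<sigma> \<longleftrightarrow> bij_betw \<sigma> V V \<and> (\<forall>u\<in>V. \<forall>v\<in>V. E u v \<longleftrightarrow> E (\<sigma> u) (\<sigma> v))"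

definition has_order_2 :: "'a set \<Rightarrow> ('a \<Rightarrow> 'a) \<Rightarrow> bool" where
  "has_order_2 V \<sigma> \<longleftrightarrow> (\<forall>v\<in>V. \<sigma> (\<sigma> v) = v) \<and> (\<exists>v\<in>V. \<sigma> v \<noteq> v)"

text \<open>A Grim move: the current graph is the subgraph of E induced on S
  (S containing no isolated vertices). Delete v, then delete all vertices
  that became isolated.\<close>
definition grim_move :: "('a \<Rightarrow> 'a \<Rightarrow> bool) \<Rightarrow> 'a set \<Rightarrow> 'a \<Rightarrow> 'a set" where
  "grim_move E S v = {u \<in> S - {v}. \<exists>w \<in> S - {v}. E u w}"

lemma grim_move_subset: "v \<in> S \<Longrightarrow> grim_move E S v \<subset> S"
  unfolding grim_move_def by auto

function grim_N :: "('a \<Rightarrow> 'a \<Rightarrow> bool) \<Rightarrow> 'a set \<Rightarrow> bool" where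
  "grim_N E S = (if finite S then (\<exists>v\<in>S. \<not> grim_N E (grim_move E S v)) else False)"
  by auto
termination
  by (relation "measure (\<lambda>(E, S). card S)")
     (auto intro!: psubset_card_mono grim_move_subset)

definition grim_N_position :: "'a set \<Rightarrow> ('a \<Rightarrow> 'a \<Rightarrow> bool) \<Rightarrow> bool" where
  "grim_N_position V E \<longleftrightarrow> grim_N E {v \<in> V. \<exists>w\<in>V. E v w}"

end

theory Submission
  imports Defs
begin

lemma mirror_P:
  fixes V :: "'a set" and E :: "'a \<Rightarrow> 'a \<Rightarrow> bool" and \<sigma> :: "'a \<Rightarrow> 'a"
  assumes symE: "\<And>u v. E u v \<Longrightarrow> E v u"
    and inV: "\<And>u v. E u v \<Longrightarrow> u \<in> V \<and> v \<in> V"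
    and sV: "\<And>v. v \<in> V \<Longrightarrow> \<sigma> v \<in> V"
    and inv: "\<And>v. v \<in> V \<Longrightarrow> \<sigma> (\<sigma> v) = v"
    and hom: "\<And>u v. u \<in> V \<Longrightarrow> v \<in> V \<Longrightarrow> E u v \<Longrightarrow> E (\<sigma> u) (\<sigma> v)"
    and noE: "\<And>v. v \<in> V \<Longrightarrow> \<not> E v (\<sigma> v)"
  shows "finite S \<Longrightarrow> S \<subseteq> V \<Longrightarrow> (\<forall>x\<in>S. \<sigma> x \<in> S) \<Longrightarrow> (\<forall>x\<in>S. \<sigma> x \<noteq> x)
     \<Longrightarrow> (\<forall>x\<in>S. \<exists>w\<in>S. E x w) \<Longrightarrow> \<not> grim_N E S"
proof (induction "card S" arbitrary: S rule: less_induct)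
  case less
  show ?case
  proof
    assume g: "grim_N E S"
    then obtain u where uS: "u \<in> S" and ng: "\<not> grim_N E (grim_move E S u)"
      using less.prems(1) by (subst (asm) grim_N.simps) (auto simp del: grim_N.simps)
    define T where "T = grim_move E S u"
    have uV: "u \<in> V" using uS less.prems by auto
    have su: "\<sigma> u \<in> S" "\<sigma> u \<noteq> u" using uS less.prems by auto
    obtain w where w: "w \<in> S" "E (\<sigma> u) w" using su less.prems by blast
    have "w \<noteq> u" using w noE[OF uV] symE by auto
    hence suT: "\<sigma> u \<in> T" using w su unfolding T_def grim_move_def by auto
    define A where "A = S - {u, \<sigma> u}"
    have T'eq: "grim_move E T (\<sigma> u) = {x \<in> A. \<exists>w\<in>A. E x w}"
      unfolding T_def grim_move_def A_def using symE by auto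
    have fT: "finite T" unfolding T_def grim_move_def using less.prems(1) by auto
    have sub: "{x \<in> A. \<exists>w\<in>A. E x w} \<subset> S" using uS A_def by auto
    have Aclosed: "\<forall>x\<in>A. \<sigma> x \<in> A"
    proof
      fix x assume x: "x \<in> A"
      have xV: "x \<in> V" using x A_def less.prems by auto
      have "\<sigma> x \<in> S" using x A_def less.prems by auto
      moreover have "\<sigma> x \<noteq> u" using x A_def inv[OF xV] by auto
      moreover have "\<sigma> x \<noteq> \<sigma> u" proof
        assume "\<sigma> x = \<sigma> u" hence "\<sigma> (\<sigma> x) = \<sigma> (\<sigma> u)" by simp
        thus False using x A_def inv[OF xV] inv[OF uV] by auto
      qed
      ultimately show "\<sigma> x \<in> A" using A_def by auto
    qed
    have "\<not> grim_N E {x \<in> A. \<exists>w\<in>A. E x w}"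
    proof (rule less.hyps)
      show "card {x \<in> A. \<exists>w\<in>A. E x w} < card S" using sub less.prems(1) psubset_card_mono by blast
      show "finite {x \<in> A. \<exists>w\<in>A. E x w}" using sub less.prems(1) finite_subset by blast
      show "{x \<in> A. \<exists>w\<in>A. E x w} \<subseteq> V" using sub less.prems(2) by blast
      show "\<forall>x\<in>{x \<in> A. \<exists>w\<in>A. E x w}. \<sigma> x \<in> {x \<in> A. \<exists>w\<in>A. E x w}"
      proof
        fix x assume "x \<in> {x \<in> A. \<exists>w\<in>A. E x w}"
        then obtain w where "x \<in> A" "w \<in> A" "E x w" by auto
        moreover have "x \<in> V" "w \<in> V" using \<open>E x w\<close> inV by auto
        ultimately show "\<sigma> x \<in> {x \<in> A. \<exists>w\<in>A. E x w}" using Aclosed hom by blast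
      qed
      show "\<forall>x\<in>{x \<in> A. \<exists>w\<in>A. E x w}. \<sigma> x \<noteq> x" using less.prems(4) A_def by auto
      show "\<forall>x\<in>{x \<in> A. \<exists>w\<in>A. E x w}. \<exists>w\<in>{x \<in> A. \<exists>w\<in>A. E x w}. E x w"
        using symE by blast
    qed
    hence "grim_N E T = True" using fT suT T'eq by (subst grim_N.simps) (simp del: grim_N.simps, rule bexI[of _ "\<sigma> u"], simp_all del: grim_N.simps)
    thus False using ng T_def by simp
  qed
qed

theorem corollary4p3:
  fixes V :: "'a set" and E :: "'a \<Rightarrow> 'a \<Rightarrow> bool" and \<sigma> :: "'a \<Rightarrow> 'a"
  assumes "simple_graph V E"
    and "no_isolated V E"
    and "automorphism V E \<sigma>"
    and "has_order_2 V \<sigma>"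
    and "\<exists>!v0. v0 \<in> V \<and> \<sigma> v0 = v0"
    and "\<forall>v\<in>V. \<not> E v (\<sigma> v)"
  shows "grim_N_position V E"
proof -
  have fin: "finite V" and symE: "\<And>u v. E u v \<Longrightarrow> E v u"
    and inV: "\<And>u v. E u v \<Longrightarrow> u \<in> V \<and> v \<in> V"
    using assms(1) unfolding simple_graph_def by auto
  have sV: "\<And>v. v \<in> V \<Longrightarrow> \<sigma> v \<in> V" using assms(3) unfolding automorphism_def
    by (meson bij_betwE)
  have inv: "\<And>v. v \<in> V \<Longrightarrow> \<sigma> (\<sigma> v) = v" using assms(4) unfolding has_order_2_def by auto
  have hom: "\<And>u v. u \<in> V \<Longrightarrow> v \<in> V \<Longrightarrow> E u v \<Longrightarrow> E (\<sigma> u) (\<sigma> v)"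
    using assms(3) unfolding automorphism_def by auto
  have noE: "\<And>v. v \<in> V \<Longrightarrow> \<not> E v (\<sigma> v)" using assms(6) by auto
  obtain v0 where v0: "v0 \<in> V" "\<sigma> v0 = v0" and uq: "\<And>x. x \<in> V \<Longrightarrow> \<sigma> x = x \<Longrightarrow> x = v0"
    using assms(5) by blast
  have S0: "{v \<in> V. \<exists>w\<in>V. E v w} = V" using assms(2) unfolding no_isolated_def by auto
  define A where "A = V - {v0}"
  have eq: "grim_move E V v0 = {x \<in> A. \<exists>w\<in>A. E x w}" unfolding grim_move_def A_def by auto
  have Aclosed: "\<forall>x\<in>A. \<sigma> x \<in> A"
  proof
    fix x assume x: "x \<in> A"
    hence xV: "x \<in> V" using A_def by auto
    have "\<sigma> x \<noteq> v0" proof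
      assume "\<sigma> x = v0" hence "\<sigma> (\<sigma> x) = \<sigma> v0" by simp
      thus False using x A_def inv[OF xV] v0 by auto
    qed
    thus "\<sigma> x \<in> A" using sV[OF xV] A_def by auto
  qed
  have "\<not> grim_N E {x \<in> A. \<exists>w\<in>A. E x w}"
  proof (rule mirror_P[where E=E and V=V and \<sigma>=\<sigma>, OF symE inV sV inv hom noE])
    show "finite {x \<in> A. \<exists>w\<in>A. E x w}" using fin A_def by auto
    show "{x \<in> A. \<exists>w\<in>A. E x w} \<subseteq> V" using A_def by auto
    show "\<forall>x\<in>{x \<in> A. \<exists>w\<in>A. E x w}. \<sigma> x \<in> {x \<in> A. \<exists>w\<in>A. E x w}"
    proof
      fix x assume "x \<in> {x \<in> A. \<exists>w\<in>A. E x w}"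
      then obtain w where "x \<in> A" "w \<in> A" "E x w" by auto
      moreover have "x \<in> V" "w \<in> V" using \<open>E x w\<close> inV by auto
      ultimately show "\<sigma> x \<in> {x \<in> A. \<exists>w\<in>A. E x w}" using Aclosed hom by blast
    qed
    show "\<forall>x\<in>{x \<in> A. \<exists>w\<in>A. E x w}. \<sigma> x \<noteq> x" using uq A_def by auto
    show "\<forall>x\<in>{x \<in> A. \<exists>w\<in>A. E x w}. \<exists>w\<in>{x \<in> A. \<exists>w\<in>A. E x w}. E x w"
      using symE by blast
  qed
  hence "grim_N E V" using fin v0 eq by (subst grim_N.simps) (simp del: grim_N.simps, rule bexI[of _ v0], simp_all del: grim_N.simps)
  thus ?thesis unfolding grim_N_position_def S0 .
qed

end
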